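(* Let $r\in\mathfrak L\otimes\mathfrak L$ be such that $\omega\cdot r\in\mathrm{Im}(1-\tau)$ for all $\omega\in\mathfrak L$. Then $r\in\mathrm{Im}(1-\tau)+\mathcal C\otimes\mathcal C$, i.e. $r\in\mathrm{Im}(1-\tau)$ modulo $\mathcal C\otimes\mathcal C$.
   Context: Let $\mathbb F$ be a field of characteristic $0$ and let $\Gamma$ be an additive subgroup of $\mathbb F$ with $\mathbb Z\subseteq\Gamma$. The generalized Heisenberg–Virasoro algebra $\mathfrak L=\mathfrak L(\Gamma)$ is the Lie algebra over $\mathbb F$ with basis $\{L_x,I_x:x\in\Gamma\}\cup\{C_L,C_I,C_{LI}\}$ and brackets $[L_x,L_y]=(y-x)L_{x+y}+\delta_{x+y,0}\frac{1}{12}(x^3-x)C_L$, $[I_x,I_y]=y\,\delta_{x+y,0}C_I$, $[L_x,I_y]=yI_{x+y}+\delta_{x+y,0}(x^2-x)C_{LI}$, with $C_L,C_I,C_{LI}$ central. Its center is $\mathcal C=\mathrm{span}_{\mathbb F}\{I_0,C_L,C_I,C_{LI}\}$. $\mathfrak L$ acts on $\mathfrak L\otimes\mathfrak L$ by $\omega\cdot(a\otimes b)=[\omega,a]\otimes b+a\otimes[\omega,b]$. The twist map is $\tau(a\otimes b)=b\otimes a$, and $\mathrm{Im}(1-\tau)$ is the space of skew-symmetric tensors in $\mathfrak L\otimes\mathfrak L$. *)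

theory Defs
  imports Main
begin

text \<open>Basis of the generalized Heisenberg-Virasoro algebra: L_x, I_x (x in Gamma), C_L, C_I, C_LI.
  Elements of the algebra are finitely supported coefficient functions on this basis;
  elements of L (x) L are finitely supported coefficient functions on pairs of basis elements.\<close>

datatype 'a hvb = Lb 'a | Ib 'a | CL | CI | CLI

definition add_subgroup_Z :: "'a::field_char_0 set \<Rightarrow> bool" where
  "add_subgroup_Z G \<longleftrightarrow> 0 \<in> G \<and> (\<forall>x\<in>G. \<forall>y\<in>G. x + y \<in> G) \<and> (\<forall>x\<in>G. - x \<in> G)
     \<and> (\<forall>n::int. of_int n \<in> G)"

definition hv_basis :: "'a set \<Rightarrow> 'a hvb set" where
  "hv_basis G = Lb ` G \<union> Ib ` G \<union> {CL, CI, CLI}"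

definition hv_alg :: "'a::field set \<Rightarrow> ('a hvb \<Rightarrow> 'a) set" where
  "hv_alg G = {x. finite {b. x b \<noteq> 0} \<and> (\<forall>b. x b \<noteq> 0 \<longrightarrow> b \<in> hv_basis G)}"

definition hv_tens :: "'a::field set \<Rightarrow> ('a hvb \<times> 'a hvb \<Rightarrow> 'a) set" where
  "hv_tens G = {t. finite {p. t p \<noteq> 0} \<and> (\<forall>p. t p \<noteq> 0 \<longrightarrow> p \<in> hv_basis G \<times> hv_basis G)}"

definition ev :: "'b \<Rightarrow> 'b \<Rightarrow> 'a::field" where
  "ev b = (\<lambda>c. if c = b then 1 else 0)"

fun hv_brb :: "'a::field_char_0 hvb \<Rightarrow> 'a hvb \<Rightarrow> ('a hvb \<Rightarrow> 'a)" where
  "hv_brb (Lb x) (Lb y) = (\<lambda>c. (y - x) * ev (Lb (x + y)) c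
      + (if x + y = 0 then (x ^ 3 - x) / 12 else 0) * ev CL c)"
| "hv_brb (Ib x) (Ib y) = (\<lambda>c. (if x + y = 0 then y else 0) * ev CI c)"
| "hv_brb (Lb x) (Ib y) = (\<lambda>c. y * ev (Ib (x + y)) c
      + (if x + y = 0 then x ^ 2 - x else 0) * ev CLI c)"
| "hv_brb (Ib y) (Lb x) = (\<lambda>c. - (y * ev (Ib (x + y)) c
      + (if x + y = 0 then x ^ 2 - x else 0) * ev CLI c))"
| "hv_brb _ _ = (\<lambda>c. 0)"

definition hv_br :: "('a::field_char_0 hvb \<Rightarrow> 'a) \<Rightarrow> ('a hvb \<Rightarrow> 'a) \<Rightarrow> ('a hvb \<Rightarrow> 'a)" where
  "hv_br x y = (\<lambda>c. \<Sum>a\<in>{a. x a \<noteq> 0}. \<Sum>b\<in>{b. y b \<noteq> 0}. x a * y b * hv_brb a b c)"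

text \<open>omega . (a (x) b) = [omega,a] (x) b + a (x) [omega,b], extended linearly.\<close>
definition hv_act :: "('a::field_char_0 hvb \<Rightarrow> 'a) \<Rightarrow> ('a hvb \<times> 'a hvb \<Rightarrow> 'a) \<Rightarrow> ('a hvb \<times> 'a hvb \<Rightarrow> 'a)" where
  "hv_act w t = (\<lambda>(c, d). \<Sum>p\<in>{p. t p \<noteq> 0}. t p *
      (hv_br w (ev (fst p)) c * ev (snd p) d + ev (fst p) c * hv_br w (ev (snd p)) d))"

definition twist :: "('b \<times> 'b \<Rightarrow> 'a) \<Rightarrow> ('b \<times> 'b \<Rightarrow> 'a)" where
  "twist t = (\<lambda>(a, b). t (b, a))"

definition skew_im :: "'a::field set \<Rightarrow> ('a hvb \<times> 'a hvb \<Rightarrow> 'a) set" where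
  "skew_im G = {(\<lambda>p. s p - twist s p) | s. s \<in> hv_tens G}"

text \<open>Basis of the center C = span{I_0, C_L, C_I, C_LI}; C (x) C = tensors supported on pairs of these.\<close>
definition center_basis :: "'a::zero hvb set" where
  "center_basis = {Ib 0, CL, CI, CLI}"

definition CC_tens :: "'a::field set \<Rightarrow> ('a hvb \<times> 'a hvb \<Rightarrow> 'a) set" where
  "CC_tens G = {t \<in> hv_tens G. \<forall>p. t p \<noteq> 0 \<longrightarrow> p \<in> center_basis \<times> center_basis}"

end

theory Submission
  imports Defs
begin

lemma br_ev: "hv_br (ev (Lb z)) (ev a) c = hv_brb (Lb z) a c"
proof -
  have 1: "{a'. (ev (Lb z) a' :: 'a) \<noteq> 0} = {Lb z}" by (auto simp: ev_def)
  have 2: "{b. (ev a b :: 'a) \<noteq> 0} = {a}" by (auto simp: ev_def)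
  show ?thesis unfolding hv_br_def 1 2 by (simp add: ev_def)
qed

lemma act_ev: "hv_act (ev (Lb z)) r (c,d) = (\<Sum>p\<in>{p. r p \<noteq> 0}. r p *
   (hv_brb (Lb z) (fst p) c * ev (snd p) d + ev (fst p) c * hv_brb (Lb z) (snd p) d))"
  by (simp add: hv_act_def br_ev)

lemma sum_single:
  assumes "finite S" "\<And>p. p \<in> S \<Longrightarrow> p \<noteq> q \<Longrightarrow> f p = 0" "q \<notin> S \<Longrightarrow> f q = 0"
  shows "sum f S = (f q :: 'a::comm_monoid_add)"
proof (cases "q \<in> S")
  case True
  then have "sum f S = f q + sum f (S - {q})" using assms(1) by (simp add: sum.remove)
  moreover have "sum f (S - {q}) = 0" using assms(2) by (intro sum.neutral) auto
  ultimately show ?thesis by simp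
next
  case False
  then have "sum f S = 0" using assms(2) by (intro sum.neutral) auto
  then show ?thesis using assms(3) False by simp
qed

lemma key:
  fixes r :: "'a::field_char_0 hvb \<times> 'a hvb \<Rightarrow> 'a"
  assumes fin: "finite {p. r p \<noteq> 0}"
    and skew: "\<forall>w\<in>hv_alg G. hv_act w r \<in> skew_im G"
    and ZG: "\<forall>n::int. of_int n \<in> G"
    and a: "a = Lb x \<or> (a = Ib x \<and> x \<noteq> 0)"
  shows "r (a,b) + r (b,a) = 0"
proof -
  define S where "S = {p. r p \<noteq> 0}"
  define B where "B = fst ` S \<union> snd ` S"
  have finB: "finite B" unfolding B_def S_def using fin by simp
  define F where "F = insert x ((\<lambda>y. y - x) ` (Lb -` B \<union> Ib -` B))"
  have finF: "finite F" unfolding F_def using finB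
    by (simp add: finite_vimageI inj_def)
  have "finite ((of_int :: int \<Rightarrow> 'a) -` F)"
    using finF by (rule finite_vimageI) (simp add: inj_def)
  then obtain n :: int where n: "of_int n \<notin> F"
    using infinite_UNIV_int by (metis UNIV_I finite_subset subsetI vimageI)
  define z :: 'a where "z = of_int n"
  have zx: "z \<noteq> x" and zB: "Lb (x+z) \<notin> B" "Ib (x+z) \<notin> B"
  proof -
    show "z \<noteq> x" using n unfolding z_def F_def by auto
    show "Lb (x+z) \<notin> B"
    proof
      assume "Lb (x+z) \<in> B"
      then have "(x+z) - x \<in> F" unfolding F_def by blast
      then show False using n z_def by simp
    qed
    show "Ib (x+z) \<notin> B"
    proof
      assume "Ib (x+z) \<in> B"
      then have "(x+z) - x \<in> F" unfolding F_def by blast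
      then show False using n z_def by simp
    qed
  qed
  have zS: "\<And>p. p \<in> S \<Longrightarrow> fst p \<noteq> Lb (x+z) \<and> fst p \<noteq> Ib (x+z) \<and> snd p \<noteq> Lb (x+z) \<and> snd p \<noteq> Ib (x+z)"
    using zB unfolding B_def by force
  have "ev (Lb z) \<in> hv_alg G"
  proof -
    have "{b. (ev (Lb z) b :: 'a) \<noteq> 0} = {Lb z}" by (auto simp: ev_def)
    moreover have "z \<in> G" using ZG z_def by simp
    ultimately show ?thesis by (auto simp: hv_alg_def hv_basis_def ev_def)
  qed
  with skew obtain s where s: "hv_act (ev (Lb z)) r = (\<lambda>p. s p - twist s p)"
    by (auto simp: skew_im_def)
  define A where "A = hv_act (ev (Lb z)) r"
  have Askew: "\<And>c d. A (c,d) + A (d,c) = 0" unfolding A_def s by (simp add: twist_def)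
  define c where "c = (if a = Lb x then Lb (x+z) else Ib (x+z))"
  define k where "k = (if a = Lb x then x - z else x)"
  have k0: "k \<noteq> 0" using a zx by (auto simp: k_def)
  have cS: "\<And>p. p \<in> S \<Longrightarrow> fst p \<noteq> c \<and> snd p \<noteq> c" using zS by (auto simp: c_def)
  have brc: "\<And>e. hv_brb (Lb z) e c = (if e = a then k else 0)"
  proof -
    fix e
    show "hv_brb (Lb z) e c = (if e = a then k else 0)"
      using a by (cases e) (auto simp: c_def k_def ev_def algebra_simps)
  qed
  have ac: "a = c \<Longrightarrow> r (a,b) = 0 \<and> r (b,a) = 0"
    using cS[unfolded S_def, of "(a,b)"] cS[unfolded S_def, of "(b,a)"] by auto
  have "A (c,b) = k * r (a,b)"
    unfolding A_def act_ev
  proof (subst sum_single[where q="(a,b)"])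
    show "finite {p. r p \<noteq> 0}" by fact
    show "\<And>p. p \<in> {p. r p \<noteq> 0} \<Longrightarrow> p \<noteq> (a, b) \<Longrightarrow>
      r p * (hv_brb (Lb z) (fst p) c * ev (snd p) b + ev (fst p) c * hv_brb (Lb z) (snd p) b) = 0"
      using cS unfolding S_def by (auto simp: brc ev_def prod_eq_iff)
  qed (cases "a = c", use ac in \<open>auto simp: brc ev_def\<close>)
  moreover have "A (b,c) = k * r (b,a)"
    unfolding A_def act_ev
  proof (subst sum_single[where q="(b,a)"])
    show "finite {p. r p \<noteq> 0}" by fact
    show "\<And>p. p \<in> {p. r p \<noteq> 0} \<Longrightarrow> p \<noteq> (b, a) \<Longrightarrow>
      r p * (hv_brb (Lb z) (fst p) b * ev (snd p) c + ev (fst p) b * hv_brb (Lb z) (snd p) c) = 0"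
      using cS unfolding S_def by (auto simp: brc ev_def prod_eq_iff)
  qed (cases "a = c", use ac in \<open>auto simp: brc ev_def\<close>)
  ultimately have "k * (r (a,b) + r (b,a)) = 0" using Askew[of c b] by (simp add: algebra_simps)
  with k0 show ?thesis by simp
qed

theorem lemma2p5:
  fixes G :: "'a::field_char_0 set" and r :: "'a hvb \<times> 'a hvb \<Rightarrow> 'a"
  assumes "add_subgroup_Z G"
    and "r \<in> hv_tens G"
    and "\<forall>w\<in>hv_alg G. hv_act w r \<in> skew_im G"
  shows "\<exists>s\<in>skew_im G. \<exists>c\<in>CC_tens G. r = (\<lambda>p. s p + c p)"
proof -
  have G0: "0 \<in> G" and ZG: "\<forall>n::int. of_int n \<in> G" using assms(1) by (auto simp: add_subgroup_Z_def)
  have fin: "finite {p. r p \<noteq> 0}" and supp: "\<And>p. r p \<noteq> 0 \<Longrightarrow> p \<in> hv_basis G \<times> hv_basis G"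
    using assms(2) by (auto simp: hv_tens_def)
  have keyr: "\<And>a b. a \<notin> center_basis \<Longrightarrow> r (a,b) + r (b,a) = 0"
  proof -
    fix a b :: "'a hvb"
    assume na: "a \<notin> center_basis"
    then obtain x where "a = Lb x \<or> (a = Ib x \<and> x \<noteq> 0)"
      by (cases a) (auto simp: center_basis_def)
    then show "r (a,b) + r (b,a) = 0" using key[OF fin assms(3) ZG] by blast
  qed
  define s where "s = (\<lambda>p. r p / 2)"
  define c where "c = (\<lambda>p. (r p + r (snd p, fst p)) / 2)"
  have s_in: "s \<in> hv_tens G"
    using fin supp unfolding hv_tens_def s_def by auto
  have "{p. c p \<noteq> 0} \<subseteq> {p. r p \<noteq> 0} \<union> (\<lambda>(a,b). (b,a)) ` {p. r p \<noteq> 0}"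
    unfolding c_def by (force simp: image_iff)
  then have cfin: "finite {p. c p \<noteq> 0}" using fin finite_subset by blast
  have csupp: "\<And>p. c p \<noteq> 0 \<Longrightarrow> p \<in> center_basis \<times> center_basis"
  proof -
    fix p assume cp: "c p \<noteq> 0"
    obtain a b where p: "p = (a,b)" by (cases p)
    have "a \<in> center_basis"
    proof (rule ccontr)
      assume "a \<notin> center_basis"
      then have "r (a,b) + r (b,a) = 0" by (rule keyr)
      then show False using cp unfolding p c_def by simp
    qed
    moreover have "b \<in> center_basis"
    proof (rule ccontr)
      assume "b \<notin> center_basis"
      then have "r (b,a) + r (a,b) = 0" by (rule keyr)
      then show False using cp unfolding p c_def by (simp add: add.commute)
    qed
    ultimately show "p \<in> center_basis \<times> center_basis" using p by simp
  qed
  have cb: "center_basis \<subseteq> hv_basis G" using G0 by (auto simp: center_basis_def hv_basis_def)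
  have c_in: "c \<in> CC_tens G"
    unfolding CC_tens_def hv_tens_def using cfin csupp cb by blast
  have "(\<lambda>p. s p - twist s p) \<in> skew_im G" using s_in unfolding skew_im_def by blast
  moreover have "r = (\<lambda>p. (s p - twist s p) + c p)"
    by (rule ext) (auto simp: s_def c_def twist_def field_simps)
  ultimately show ?thesis using c_in by (intro bexI[of _ "\<lambda>p. s p - twist s p"] bexI[of _ c]) auto
qed

end
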